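(* $\mathrm{Log}_{=1}(\mathbb{R})=\mathrm{Log}_{=1}(\mathbb{Q})$.
   Context: Modal formulas are built from a countable set of propositional variables using $\bot$, $\to$ and one unary modality $\lozenge$. A frame is a pair $(X,R)$; a valuation assigns subsets of $X$ to variables; $x\models\lozenge\varphi$ iff there is $y$ with $xRy$ and $y\models\varphi$. A formula is valid in a frame if true at every point under every valuation. For a metric space $(X,d)$, $\mathrm{Log}_{=1}(X)$ is the set of modal formulas valid in the frame $(X,R_{=1})$, where $xR_{=1}y$ iff $d(x,y)=1$. $\mathbb{R}$ and $\mathbb{Q}$ carry the metric $d(x,y)=|x-y|$. *)

theory Defs
  imports Complex_Main
begin

datatype fm = Var nat | Bot | Imp fm fm | Dia fm

fun sat :: "'a set \<Rightarrow> ('a \<Rightarrow> 'a \<Rightarrow> bool) \<Rightarrow> (nat \<Rightarrow> 'a set) \<Rightarrow> 'a \<Rightarrow> fm \<Rightarrow> bool" where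
  "sat X R V x (Var p) = (x \<in> V p)"
| "sat X R V x Bot = False"
| "sat X R V x (Imp a b) = (sat X R V x a \<longrightarrow> sat X R V x b)"
| "sat X R V x (Dia a) = (\<exists>y\<in>X. R x y \<and> sat X R V y a)"

definition valid_in_frame :: "'a set \<Rightarrow> ('a \<Rightarrow> 'a \<Rightarrow> bool) \<Rightarrow> fm \<Rightarrow> bool" where
  "valid_in_frame X R \<phi> \<longleftrightarrow> (\<forall>V. (\<forall>p. V p \<subseteq> X) \<longrightarrow> (\<forall>x\<in>X. sat X R V x \<phi>))"

definition Log_eq1 :: "'a set \<Rightarrow> ('a \<Rightarrow> 'a \<Rightarrow> real) \<Rightarrow> fm set" where
  "Log_eq1 X d = {\<phi>. valid_in_frame X (\<lambda>x y. d x y = 1) \<phi>}"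

end

theory Submission
  imports Defs
begin

lemma pmor:
  assumes fwd: "\<And>a a'. RA a a' \<Longrightarrow> RB (f a) (f a')"
    and bwd: "\<And>a y. RB (f a) y \<Longrightarrow> \<exists>a'. RA a a' \<and> f a' = y"
  shows "sat UNIV RB V (f a) \<phi> = sat UNIV RA (\<lambda>p. f -` V p) a \<phi>"
proof (induction \<phi> arbitrary: a)
  case (Dia \<phi>)
  then show ?case using fwd bwd by auto metis
qed auto

definition ZR :: "int \<Rightarrow> int \<Rightarrow> bool" where "ZR m n \<longleftrightarrow> \<bar>m - n\<bar> = 1"

definition LZ :: "fm set" where "LZ = {\<phi>. \<forall>U a. sat UNIV ZR U a \<phi>}"

lemma real_LZ: "Log_eq1 (UNIV :: real set) (\<lambda>x y. \<bar>x - y\<bar>) = LZ"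
proof -
  let ?R = "\<lambda>x y::real. \<bar>x - y\<bar> = 1"
  have fl: "sat UNIV ZR U (floor x) \<phi> = sat UNIV ?R (\<lambda>p. floor -` U p) x \<phi>" for U x \<phi>
  proof (rule pmor)
    fix a a' :: real assume "?R a a'"
    then have "a' = a + 1 \<or> a' = a - 1" by auto
    then show "ZR (floor a) (floor a')" unfolding ZR_def by auto
  next
    fix a :: real and y assume "ZR (floor a) y"
    then have "y = floor a + 1 \<or> y = floor a - 1" unfolding ZR_def by auto
    then show "\<exists>a'. ?R a a' \<and> floor a' = y"
    proof
      assume "y = floor a + 1" then show ?thesis by (intro exI[of _ "a + 1"]) auto
    next
      assume "y = floor a - 1" then show ?thesis
        by (intro exI[of _ "a - 1"]) (auto simp: floor_diff_of_int[of a 1, simplified])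
    qed
  qed
  have sh: "sat UNIV ?R V (x + real_of_int n) \<phi> = sat UNIV ZR (\<lambda>p. (\<lambda>n. x + real_of_int n) -` V p) n \<phi>" for V x n \<phi>
  proof (rule pmor[where f = "\<lambda>n. x + real_of_int n"])
    fix a a' :: int assume "ZR a a'" then show "?R (x + real_of_int a) (x + real_of_int a')"
      unfolding ZR_def by (metis add_diff_cancel_left of_int_1 of_int_abs of_int_diff)
  next
    fix a :: int and y assume "?R (x + real_of_int a) y"
    then have "y = x + real_of_int (a + 1) \<or> y = x + real_of_int (a - 1)" by auto
    then show "\<exists>a'. ZR a a' \<and> x + real_of_int a' = y"
    proof
      assume "y = x + real_of_int (a + 1)" then show ?thesis by (intro exI[of _ "a + 1"]) (auto simp: ZR_def)
    next
      assume "y = x + real_of_int (a - 1)" then show ?thesis by (intro exI[of _ "a - 1"]) (auto simp: ZR_def)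
    qed
  qed
  show ?thesis
    unfolding Log_eq1_def LZ_def valid_in_frame_def
  proof (intro set_eqI iffI)
    fix \<phi> assume "\<phi> \<in> {\<phi>. \<forall>V. (\<forall>p. V p \<subseteq> UNIV) \<longrightarrow> (\<forall>x\<in>UNIV. sat UNIV ?R V x \<phi>)}"
    then have "\<forall>V x. sat UNIV ?R V x \<phi>" by blast
    then show "\<phi> \<in> {\<phi>. \<forall>U a. sat UNIV ZR U a \<phi>}" using fl[where x="of_int _"] by simp
  next
    fix \<phi> assume "\<phi> \<in> {\<phi>. \<forall>U a. sat UNIV ZR U a \<phi>}"
    then have "\<forall>V x. sat UNIV ?R V x \<phi>" using sh[where n=0] by simp
    then show "\<phi> \<in> {\<phi>. \<forall>V. (\<forall>p. V p \<subseteq> UNIV) \<longrightarrow> (\<forall>x\<in>UNIV. sat UNIV ?R V x \<phi>)}" by blast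
  qed
qed

lemma rat_LZ: "Log_eq1 (UNIV :: rat set) (\<lambda>x y. real_of_rat \<bar>x - y\<bar>) = LZ"
proof -
  let ?R = "\<lambda>x y::rat. real_of_rat \<bar>x - y\<bar> = 1"
  have eq: "?R x y \<longleftrightarrow> \<bar>x - y\<bar> = 1" for x y
    by (metis of_rat_1 of_rat_eq_iff)
  have fl: "sat UNIV ZR U (floor x) \<phi> = sat UNIV ?R (\<lambda>p. floor -` U p) x \<phi>" for U x \<phi>
  proof (rule pmor)
    fix a a' :: rat assume "?R a a'"
    then have "a' = a + 1 \<or> a' = a - 1" unfolding eq by auto
    then show "ZR (floor a) (floor a')" unfolding ZR_def by auto
  next
    fix a :: rat and y assume "ZR (floor a) y"
    then have "y = floor a + 1 \<or> y = floor a - 1" unfolding ZR_def by auto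
    then show "\<exists>a'. ?R a a' \<and> floor a' = y"
    proof
      assume "y = floor a + 1" then show ?thesis by (intro exI[of _ "a + 1"]) (auto simp: eq)
    next
      assume "y = floor a - 1" then show ?thesis
        by (intro exI[of _ "a - 1"]) (auto simp: eq floor_diff_of_int[of a 1, simplified])
    qed
  qed
  have sh: "sat UNIV ?R V (x + rat_of_int n) \<phi> = sat UNIV ZR (\<lambda>p. (\<lambda>n. x + rat_of_int n) -` V p) n \<phi>" for V x n \<phi>
  proof (rule pmor[where f = "\<lambda>n. x + rat_of_int n"])
    fix a a' :: int assume "ZR a a'" then show "?R (x + rat_of_int a) (x + rat_of_int a')"
      unfolding ZR_def eq by (metis add_diff_cancel_left of_int_1 of_int_abs of_int_diff)
  next
    fix a :: int and y assume "?R (x + rat_of_int a) y"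
    then have "y = x + rat_of_int (a + 1) \<or> y = x + rat_of_int (a - 1)" unfolding eq by auto
    then show "\<exists>a'. ZR a a' \<and> x + rat_of_int a' = y"
    proof
      assume "y = x + rat_of_int (a + 1)" then show ?thesis by (intro exI[of _ "a + 1"]) (auto simp: ZR_def)
    next
      assume "y = x + rat_of_int (a - 1)" then show ?thesis by (intro exI[of _ "a - 1"]) (auto simp: ZR_def)
    qed
  qed
  show ?thesis
    unfolding Log_eq1_def LZ_def valid_in_frame_def
  proof (intro set_eqI iffI)
    fix \<phi> assume "\<phi> \<in> {\<phi>. \<forall>V. (\<forall>p. V p \<subseteq> UNIV) \<longrightarrow> (\<forall>x\<in>UNIV. sat UNIV ?R V x \<phi>)}"
    then have "\<forall>V x. sat UNIV ?R V x \<phi>" by blast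
    then show "\<phi> \<in> {\<phi>. \<forall>U a. sat UNIV ZR U a \<phi>}" using fl[where x="of_int _"] by simp
  next
    fix \<phi> assume "\<phi> \<in> {\<phi>. \<forall>U a. sat UNIV ZR U a \<phi>}"
    then have "\<forall>V x. sat UNIV ?R V x \<phi>" using sh[where n=0] by simp
    then show "\<phi> \<in> {\<phi>. \<forall>V. (\<forall>p. V p \<subseteq> UNIV) \<longrightarrow> (\<forall>x\<in>UNIV. sat UNIV ?R V x \<phi>)}" by blast
  qed
qed

theorem proposition4p1:
  shows "Log_eq1 (UNIV :: real set) (\<lambda>x y. \<bar>x - y\<bar>)
       = Log_eq1 (UNIV :: rat set) (\<lambda>x y. real_of_rat \<bar>x - y\<bar>)"
  using real_LZ rat_LZ by simp

end
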